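(* Let $\alpha\ge\tfrac12$ and $1\le q<\infty$. Then $\|\widehat{\mathbf{1}_{[0,1)}}\|_{\infty,q}<\infty$ if and only if $q>\frac{2(\alpha+1)}{\alpha+3/2}$. In particular $\widehat{\mathbf{1}_{[0,1)}}\in(L^\infty,\ell^2)(\mathbb{R}_+,*_\alpha)$.
   Context: Haar measure $\omega_\alpha(dz)=z^{2\alpha+1}dz$ on $\mathbb{R}_+$. Characters of the Bessel–Kingman hypergroup: $\chi_\lambda(x)=j_\alpha(\lambda x)$ with $j_\alpha(x)=\sum_{k\ge0}\frac{(-1)^k\Gamma(\alpha+1)}{2^{2k}k!\Gamma(\alpha+k+1)}x^{2k}$. Fourier transform: $\hat f(\lambda)=\int_{\mathbb{R}_+}f(x)\chi_\lambda(x)\,d\omega_\alpha(x)$. Let $I_n=[n-1,n)$, $\omega_n=\omega_\alpha(I_n)$, and $\|g\|_{\infty,q}=\big(\sum_{n\ge1}\omega_n\sup_{\lambda\in I_n}|g(\lambda)|^q\big)^{1/q}$; $(L^\infty,\ell^q)(\mathbb{R}_+,*_\alpha)$ is the space of measurable $g$ with $\|g\|_{\infty,q}<\infty$. *)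

theory Defs
  imports "HOL-Analysis.Analysis"
begin

definition bessel_j :: "real \<Rightarrow> real \<Rightarrow> real" where
  "bessel_j a x = (\<Sum>k. ((-1) ^ k * Gamma (a + 1)) /
       (2 ^ (2 * k) * fact k * Gamma (a + real k + 1)) * x ^ (2 * k))"

definition haar :: "real \<Rightarrow> real measure" where
  "haar a = density lborel (\<lambda>z. indicator {0..} z * ennreal (z powr (2 * a + 1)))"

definition bk_fourier :: "real \<Rightarrow> (real \<Rightarrow> real) \<Rightarrow> real \<Rightarrow> real" where
  "bk_fourier a f l = (\<integral>x. f x * bessel_j a (l * x) \<partial>haar a)"

definition I_int :: "nat \<Rightarrow> real set" where
  "I_int n = {real n - 1..<real n}"

definition omega_n :: "real \<Rightarrow> nat \<Rightarrow> real" where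
  "omega_n a n = measure (haar a) (I_int n)"

text \<open>The (nonnegative, extended) quantity sum_{n>=1} omega_n sup_{I_n} |g|^q is finite:
  every local supremum is finite and the series converges.\<close>
definition amalgam_norm_finite :: "real \<Rightarrow> real \<Rightarrow> (real \<Rightarrow> real) \<Rightarrow> bool" where
  "amalgam_norm_finite a q g \<longleftrightarrow>
     (\<forall>n\<ge>1. bdd_above ((\<lambda>l. \<bar>g l\<bar>) ` I_int n)) \<and>
     summable (\<lambda>m. omega_n a (Suc m) * (SUP l\<in>I_int (Suc m). \<bar>g l\<bar>) powr q)"

definition amalgam_space :: "real \<Rightarrow> real \<Rightarrow> (real \<Rightarrow> real) set" where
  "amalgam_space a q = {g. g \<in> borel_measurable borel \<and> amalgam_norm_finite a q g}"

end

theory Submission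
  imports Defs
begin


definition bc :: "real \<Rightarrow> nat \<Rightarrow> real" where
  "bc v k = (-1)^k / (4^k * fact k * Gamma (v + real k + 1))"

definition Yv :: "real \<Rightarrow> real \<Rightarrow> real" where
  "Yv v t = (\<Sum>k. bc v k * t^k)"

lemma Gamma_step: assumes "v > 0" shows "Gamma (v + real (Suc k) + 1) = (v + real k + 1) * Gamma (v + real k + 1)"
proof -
  have "v + real k + 1 \<notin> \<int>\<^sub>\<le>\<^sub>0" using assms nonpos_Ints_nonpos by fastforce
  have e: "v + real (Suc k) + 1 = (v + real k + 1) + 1" by simp
  from Gamma_plus1[OF \<open>v + real k + 1 \<notin> \<int>\<^sub>\<le>\<^sub>0\<close>] show ?thesis unfolding e .
qed

lemma Gamma_pos': "v > 0 \<Longrightarrow> Gamma (v + real k + 1) > 0" by simp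

lemma bc_Suc: assumes "v > 0"
  shows "bc v (Suc k) = - bc v k / (4 * (real k + 1) * (v + real k + 1))"
  using Gamma_step[OF assms, of k] Gamma_pos'[OF assms, of k] assms
  unfolding bc_def by (simp add: field_simps)

lemma bc_summable: assumes "v > 0" shows "summable (\<lambda>k. bc v k * t^k)"
proof (rule summable_ratio_test[where c="1/2" and N="nat \<lceil>\<bar>t\<bar>\<rceil>"])
  fix n assume n: "n \<ge> nat \<lceil>\<bar>t\<bar>\<rceil>"
  hence tn: "\<bar>t\<bar> \<le> real n" by linarith
  define X where "X = 4 * (real n + 1) * (v + real n + 1)"
  have "(4 * (real n + 1)) * 1 \<le> 4 * (real n + 1) * (v + real n + 1)"
    using assms by (intro mult_left_mono) auto
  hence "4 * (real n + 1) \<le> X" unfolding X_def by simp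
  moreover have "real n \<ge> 0" by simp
  ultimately have d0: "X \<ge> 2 * \<bar>t\<bar>" using tn by (simp add: algebra_simps)
  hence d: "4 * (real n + 1) * (v + real n + 1) \<ge> 2 * \<bar>t\<bar>" unfolding X_def .
  have pos: "4 * (real n + 1) * (v + real n + 1) > 0" using assms by simp
  have "norm (bc v (Suc n) * t ^ Suc n) = \<bar>bc v n\<bar> * \<bar>t\<bar>^n * (\<bar>t\<bar> / (4 * (real n + 1) * (v + real n + 1)))"
    using pos by (simp add: bc_Suc[OF assms] abs_mult power_abs abs_divide field_simps)
  also have "\<dots> \<le> \<bar>bc v n\<bar> * \<bar>t\<bar>^n * (1/2)"
    using d pos by (intro mult_left_mono) (auto simp: field_simps)
  also have "\<dots> = 1/2 * norm (bc v n * t^n)" by (simp add: abs_mult power_abs)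
  finally show "norm (bc v (Suc n) * t ^ Suc n) \<le> 1/2 * norm (bc v n * t^n)" .
qed simp

lemma cancel_aux: "(c::real) \<noteq> 0 \<Longrightarrow> c * (a / (b * (c * g))) = a / (b * g)"
  by (cases "b = 0 \<or> g = 0") auto

lemma diffs_bc: assumes "v > 0" shows "diffs (bc v) k = -(1/4) * bc (v+1) k"
proof -
  have e: "Gamma (v + real (Suc k) + 1) = Gamma (v + 1 + real k + 1)" by (simp add: algebra_simps)
  have "diffs (bc v) k = real (Suc k) * ((-1) * (-1)^k / ((4 * 4^k) * (real (Suc k) * fact k) * Gamma (v + 1 + real k + 1)))"
    unfolding diffs_def bc_def e by simp
  also have "\<dots> = real (Suc k) * (- (1/4) * (-1)^k / (4^k * (real (Suc k) * (fact k * Gamma (v + 1 + real k + 1)))))"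
    by (simp add: ac_simps)
  also have "\<dots> = - (1/4) * (-1)^k / (4^k * (fact k * Gamma (v + 1 + real k + 1)))"
    by (rule cancel_aux) simp
  also have "\<dots> = -(1/4) * bc (v+1) k" unfolding bc_def by (simp add: ac_simps)
  finally show ?thesis .
qed

lemma DERIV_Yv: assumes "v > 0" shows "(Yv v has_real_derivative (-(1/4) * Yv (v+1) t)) (at t)"
proof -
  have "((\<lambda>x. \<Sum>n. bc v n * x^n) has_field_derivative (\<Sum>n. diffs (bc v) n * t^n)) (at t)"
    by (rule termdiffs_strong_converges_everywhere) (rule bc_summable[OF assms])
  moreover have "(\<Sum>n. diffs (bc v) n * t^n) = -(1/4) * Yv (v+1) t"
    unfolding Yv_def diffs_bc[OF assms]
    using suminf_mult[OF bc_summable[of "v+1" t], of "-(1/4)"] assms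
    by (simp add: mult.assoc)
  ultimately show ?thesis unfolding Yv_def[abs_def] by simp
qed

lemma bc_rel: assumes "v > 0" shows "(v + 1 + real k) * bc (v+1) k = bc v k"
proof -
  have G: "Gamma (v + 1 + real k + 1) = (v + 1 + real k) * Gamma (v + real k + 1)"
    using Gamma_step[OF assms, of k] by (simp add: algebra_simps)
  have "(v + 1 + real k) * bc (v+1) k = (v + 1 + real k) * ((-1)^k / ((4^k * fact k) * ((v + 1 + real k) * Gamma (v + real k + 1))))"
    unfolding bc_def G by (simp add: ac_simps)
  also have "\<dots> = (-1)^k / ((4^k * fact k) * Gamma (v + real k + 1))"
    by (rule cancel_aux) (use assms in simp)
  finally show ?thesis unfolding bc_def .
qed

lemma Yv_rel: assumes "v > 0"
  shows "(2 * v + 2) * Yv (v+1) t - (t/2) * Yv (v+2) t = 2 * Yv v t"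
proof -
  have v1: "v + 1 > 0" using assms by simp
  let ?c = "bc (v+1)"
  let ?g = "\<lambda>k. real k * ?c k * t^k"
  have sd: "summable (\<lambda>k. diffs ?c k * t^k)"
    by (rule termdiff_converges_all) (rule bc_summable[OF v1])
  have eq1: "\<And>k. t * (diffs ?c k * t^k) = ?g (Suc k)" by (simp add: diffs_def)
  have sg1: "summable (\<lambda>k. ?g (Suc k))" using summable_mult[OF sd, of t] unfolding eq1 .
  have "summable (\<lambda>k. ?g (Suc k)) = summable ?g" by (rule summable_Suc_iff)
  with sg1 have sg: "summable ?g" by blast
  have "t * (\<Sum>k. diffs ?c k * t^k) = (\<Sum>k. ?g (Suc k))"
    using suminf_mult[OF sd, of t] unfolding eq1 by simp
  also have "\<dots> = (\<Sum>k. ?g k)" using suminf_split_head[OF sg] by simp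
  finally have A: "t * (\<Sum>k. diffs ?c k * t^k) = (\<Sum>k. ?g k)" .
  have "(\<Sum>k. diffs ?c k * t^k) = -(1/4) * Yv (v+2) t"
    unfolding Yv_def diffs_bc[OF v1]
    using suminf_mult[OF bc_summable[of "v+1+1" t], of "-(1/4)"] assms
    by (simp add: mult.assoc add.assoc)
  with A have B: "(t/2) * Yv (v+2) t = -2 * (\<Sum>k. ?g k)" by simp
  have s1: "summable (\<lambda>k. (2 * v + 2) * (?c k * t^k))" by (rule summable_mult) (rule bc_summable[OF v1])
  have s2: "summable (\<lambda>k. 2 * ?g k)" by (rule summable_mult) (rule sg)
  have "(2 * v + 2) * Yv (v+1) t + 2 * (\<Sum>k. ?g k) = (\<Sum>k. (2 * v + 2) * (?c k * t^k)) + (\<Sum>k. 2 * ?g k)"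
    unfolding Yv_def using suminf_mult[OF bc_summable[OF v1, of t]] suminf_mult[OF sg] by simp
  also have "\<dots> = (\<Sum>k. (2 * v + 2) * (?c k * t^k) + 2 * ?g k)" by (rule suminf_add[OF s1 s2])
  also have "\<dots> = (\<Sum>k. 2 * (bc v k * t^k))"
  proof (rule suminf_cong)
    fix k have "(2 * v + 2) * (?c k * t^k) + 2 * ?g k = 2 * ((v + 1 + real k) * ?c k) * t^k"
      by (simp add: algebra_simps)
    thus "(2 * v + 2) * (?c k * t^k) + 2 * ?g k = 2 * (bc v k * t^k)"
      unfolding bc_rel[OF assms, of k] by simp
  qed
  also have "\<dots> = 2 * Yv v t" unfolding Yv_def using suminf_mult[OF bc_summable[OF assms, of t]] by simp
  finally show ?thesis using B by simp
qed



lemma DERIV_Yv_comp[derivative_intros]: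
  assumes "v > 0" "(f has_real_derivative f') (at x)"
  shows "((\<lambda>x. Yv v (f x)) has_real_derivative (-(1/4) * Yv (v+1) (f x)) * f') (at x)"
  using DERIV_chain2[OF DERIV_Yv[OF assms(1)] assms(2)] .

lemma dx2: "((\<lambda>x. x^2) has_real_derivative 2*x) (at (x::real))"
  by (auto intro!: derivative_eq_intros)

lemma ode_P:
  assumes "nu > 0" "x > 0"
  shows "((\<lambda>x. x powr (nu + 1/2) * Yv nu (x^2)) has_real_derivative
     ((nu + 1/2) / x * (x powr (nu + 1/2) * Yv nu (x^2)) - x powr (nu + 1/2 + 1) * Yv (nu+1) (x^2) / 2)) (at x)"
proof -
  note d = DERIV_mult[OF has_real_derivative_powr[OF assms(2), of "nu + 1/2"] DERIV_Yv_comp[OF assms(1) dx2]]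
  have "x powr (nu + 1/2 - 1 + 1) = x powr (nu + 1/2 - 1) * x" by (subst powr_add) (use assms in simp)
  hence e1: "x powr (nu + 1/2 - 1) = x powr (nu + 1/2) / x" using assms by (simp add: field_simps)
  have e2: "x powr (nu + 1/2 + 1) = x powr (nu + 1/2) * x" by (subst powr_add) (use assms in simp)
  show ?thesis apply (rule DERIV_cong[OF d]) unfolding e1 e2 using assms by (simp add: field_simps)
qed

lemma ode_Q:
  assumes "nu > 0" "x > 0"
  shows "((\<lambda>x. x powr (nu + 1/2 + 1) * Yv (nu+1) (x^2) / 2) has_real_derivative
     (x powr (nu + 1/2) * Yv nu (x^2) - (nu + 1/2) / x * (x powr (nu + 1/2 + 1) * Yv (nu+1) (x^2) / 2))) (at x)"
proof -
  have nu1: "nu + 1 > 0" using assms by simp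
  note d = DERIV_cdivide[OF DERIV_mult[OF has_real_derivative_powr[OF assms(2), of "nu + 1/2 + 1"] DERIV_Yv_comp[OF nu1 dx2]], of 2]
  have e1: "x powr (nu + 1/2 + 1 - 1) = x powr (nu + 1/2)" by (rule arg_cong[of _ _ "\<lambda>e. x powr e"]) simp
  have e2: "x powr (nu + 1/2 + 1) = x powr (nu + 1/2) * x" by (subst powr_add) (use assms in simp)
  have r: "(2 * nu + 2) * Yv (nu+1) (x^2) - (x^2/2) * Yv (nu+2) (x^2) = 2 * Yv nu (x^2)"
    by (rule Yv_rel[OF assms(1)])
  have e3: "nu + 1 + 1 = nu + 2" by simp
  have r': "Yv nu (x^2) = ((2 * nu + 2) * Yv (nu+1) (x^2) - (x^2/2) * Yv (nu+2) (x^2))/2" using r by simp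
  show ?thesis apply (rule DERIV_cong[OF d]) unfolding e1 e2 e3 r' using assms by (simp add: field_simps power2_eq_square)
qed



lemma two_ab_le: "2 * \<bar>a * b\<bar> \<le> a^2 + (b::real)^2"
proof -
  have "0 \<le> (\<bar>a\<bar> - \<bar>b\<bar>)^2" by simp
  thus ?thesis by (simp add: power2_eq_square algebra_simps abs_mult)
qed

lemma half_aux: "0 \<le> (s::real) \<Longrightarrow> s/2 \<le> e \<Longrightarrow> 0 \<le> e" by linarith

lemma nonvanish:
  fixes P Q :: "real \<Rightarrow> real" and \<beta> d x1 :: real
  assumes b: "\<beta> > 0"
    and dP: "\<And>x. x > 0 \<Longrightarrow> (P has_real_derivative (\<beta>/x*P x - Q x)) (at x)"
    and dQ: "\<And>x. x > 0 \<Longrightarrow> (Q has_real_derivative (P x - \<beta>/x*Q x)) (at x)"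
    and d: "0 < d" "d \<le> x1" and z: "P x1 = 0" "Q x1 = 0"
  shows "P d = 0"
proof -
  define K where "K = 2*\<beta>/d"
  define H where "H x = (P x ^ 2 + Q x ^ 2) * exp (K*x)" for x
  define H' where "H' x = (2*P x*(\<beta>/x*P x - Q x) + 2*Q x*(P x - \<beta>/x*Q x) + K*(P x ^ 2 + Q x ^ 2)) * exp(K*x)" for x
  have dH: "(H has_real_derivative H' x) (at x)" if x: "x \<in> {d..x1}" for x
  proof -
    from x d have xp: "x > 0" by auto
    show ?thesis unfolding H_def[abs_def] H'_def
      by (auto intro!: derivative_eq_intros dP[OF xp] dQ[OF xp] simp: algebra_simps power2_eq_square)
  qed
  have H'nn: "H' x \<ge> 0" if x: "x \<in> {d..x1}" for x
  proof -
    from x d have xp: "x > 0" and xd: "d \<le> x" by auto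
    have e: "2*P x*(\<beta>/x*P x - Q x) + 2*Q x*(P x - \<beta>/x*Q x) = 2*\<beta>/x*(P x^2 - Q x^2)"
      by (simp add: algebra_simps power2_eq_square)
    have "2*\<beta>/x \<le> K" unfolding K_def using b xp xd d by (intro divide_left_mono) auto
    hence "2*\<beta>/x * (P x^2 + Q x^2) \<le> K * (P x^2 + Q x^2)" by (intro mult_right_mono) auto
    moreover have "2*\<beta>/x*(P x^2 - Q x^2) + 2*\<beta>/x * (P x^2 + Q x^2) = 4*\<beta>/x * P x^2"
      by (simp add: algebra_simps)
    moreover have "4*\<beta>/x * P x^2 \<ge> 0" using b xp by simp
    ultimately have "2*P x*(\<beta>/x*P x - Q x) + 2*Q x*(P x - \<beta>/x*Q x) + K*(P x^2 + Q x^2) \<ge> 0"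
      unfolding e by linarith
    thus ?thesis unfolding H'_def by simp
  qed
  have "H d \<le> H x1" by (rule deriv_nonneg_imp_mono[OF dH H'nn]) (use d in auto)
  also have "H x1 = 0" unfolding H_def using z by simp
  finally have "(P d ^ 2 + Q d ^ 2) * exp (K*d) \<le> 0" unfolding H_def .
  hence "P d ^ 2 + Q d ^ 2 \<le> 0" by (simp add: mult_le_0_iff)
  moreover have "Q d ^ 2 \<ge> 0" by simp
  moreover have "P d ^ 2 \<ge> 0" by simp
  ultimately have "P d ^ 2 = 0" by linarith
  thus ?thesis by simp
qed

lemma energy:
  fixes P Q :: "real \<Rightarrow> real" and \<beta> x1 :: real
  assumes b: "\<beta> > 0"
    and dP: "\<And>x. x > 0 \<Longrightarrow> (P has_real_derivative (\<beta>/x*P x - Q x)) (at x)"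
    and dQ: "\<And>x. x > 0 \<Longrightarrow> (Q has_real_derivative (P x - \<beta>/x*Q x)) (at x)"
    and x1: "2*\<beta> \<le> x1" and nz: "P x1 ^ 2 + Q x1 ^ 2 > 0"
  shows "\<exists>c1 c2. c1 > 0 \<and> (\<forall>x\<ge>x1. c1 \<le> P x ^ 2 + Q x ^ 2 \<and> P x ^ 2 + Q x ^ 2 \<le> c2)"
proof -
  have x1p: "x1 > 0" using b x1 by simp
  define E where "E x = P x ^ 2 + Q x ^ 2 - 2*\<beta>/x * P x * Q x" for x
  define E' where "E' x = 2*\<beta>/x^2 * P x * Q x" for x
  have dE: "(E has_real_derivative E' x) (at x)" if xp: "x > 0" for x
    unfolding E_def[abs_def] E'_def using xp
    by (auto intro!: derivative_eq_intros dP[OF xp] dQ[OF xp] simp: field_simps power2_eq_square)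
  have bnds: "(P x^2 + Q x^2)/2 \<le> E x \<and> E x \<le> 3*(P x^2 + Q x^2)/2 \<and> \<bar>E' x\<bar> \<le> 2*\<beta>/x^2 * E x"
    if x: "x \<ge> x1" for x
  proof -
    have xp: "x > 0" using x x1p by simp
    have r: "2*\<beta>/x \<le> 1" using x x1 xp by simp
    have A: "2 * \<bar>P x * Q x\<bar> \<le> P x^2 + Q x^2" by (rule two_ab_le)
    have "\<bar>2*\<beta>/x * P x * Q x\<bar> = 2*\<beta>/x * \<bar>P x * Q x\<bar>" using b xp by (simp add: abs_mult)
    also have "\<dots> \<le> 1 * \<bar>P x * Q x\<bar>" using r by (intro mult_right_mono) auto
    finally have B: "\<bar>2*\<beta>/x * P x * Q x\<bar> \<le> \<bar>P x * Q x\<bar>" by simp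
    have l: "(P x^2 + Q x^2)/2 \<le> E x" and u: "E x \<le> 3*(P x^2 + Q x^2)/2" unfolding E_def
    proof -
      obtain y where y: "y = 2*\<beta>/x * P x * Q x" by blast
      obtain z where z: "z = P x * Q x" by blast
      obtain S where S: "S = P x^2 + Q x^2" by blast
      have "2*\<bar>z\<bar> \<le> S" "\<bar>y\<bar> \<le> \<bar>z\<bar>" using A B y z S by auto
      hence "S/2 \<le> S - y" "S - y \<le> 3*S/2" by (auto simp: abs_le_iff)
      thus "(P x^2 + Q x^2)/2 \<le> P x^2 + Q x^2 - 2*\<beta>/x * P x * Q x"
        "P x^2 + Q x^2 - 2*\<beta>/x * P x * Q x \<le> 3*(P x^2 + Q x^2)/2" using y S by auto
    qed
    have "\<bar>E' x\<bar> = 2*\<beta>/x^2 * \<bar>P x * Q x\<bar>" unfolding E'_def using b xp by (simp add: abs_mult)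
    also have "\<dots> \<le> 2*\<beta>/x^2 * E x" using A l b xp by (intro mult_left_mono) auto
    finally show ?thesis using l u by simp
  qed
  define G1 where "G1 x = - (E x * exp (2*\<beta>/x))" for x
  define G1' where "G1' x = - (E' x * exp (2*\<beta>/x) + E x * (exp (2*\<beta>/x) * (- (2*\<beta>) / x^2)))" for x
  define G2 where "G2 x = E x * exp (- (2*\<beta>/x))" for x
  define G2' where "G2' x = E' x * exp (- (2*\<beta>/x)) + E x * (exp (- (2*\<beta>/x)) * (2*\<beta> / x^2))" for x
  have dG1: "(G1 has_real_derivative G1' x) (at x)" if xp: "x > 0" for x
    unfolding G1_def[abs_def] G1'_def using xp
    by (auto intro!: derivative_eq_intros dE[OF xp] simp: field_simps power2_eq_square)
  have dG2: "(G2 has_real_derivative G2' x) (at x)" if xp: "x > 0" for x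
    unfolding G2_def[abs_def] G2'_def using xp
    by (auto intro!: derivative_eq_intros dE[OF xp] simp: field_simps power2_eq_square)
  have G1'nn: "G1' x \<ge> 0" if x: "x \<in> {x1..X}" for x X
  proof -
    have "x \<ge> x1" using x by simp
    from bnds[OF this] have "E' x \<le> 2*\<beta>/x^2 * E x" by linarith
    hence "E' x - 2*\<beta>/x^2 * E x \<le> 0" by simp
    hence "(E' x - 2*\<beta>/x^2 * E x) * exp (2*\<beta>/x) \<le> 0" by (simp add: mult_le_0_iff)
    thus ?thesis unfolding G1'_def by (simp add: algebra_simps)
  qed
  have G2'nn: "G2' x \<ge> 0" if x: "x \<in> {x1..X}" for x X
  proof -
    have "x \<ge> x1" using x by simp
    from bnds[OF this] have "- E' x \<le> 2*\<beta>/x^2 * E x" by linarith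
    hence "E' x + 2*\<beta>/x^2 * E x \<ge> 0" by simp
    hence "(E' x + 2*\<beta>/x^2 * E x) * exp (- (2*\<beta>/x)) \<ge> 0" by simp
    thus ?thesis unfolding G2'_def by (simp add: algebra_simps)
  qed
  have E1: "E x1 > 0" using bnds[of x1] nz by simp
  show ?thesis
  proof (intro exI conjI allI impI)
    show "2/3 * (E x1 * exp (- (2*\<beta>/x1))) > 0" using E1 by simp
    fix x assume x: "x1 \<le> x"
    have xp: "x > 0" using x x1p by simp
    have "G1 x1 \<le> G1 x" by (rule deriv_nonneg_imp_mono[OF dG1 G1'nn]) (use x x1p in auto)
    hence g1: "E x * exp (2*\<beta>/x) \<le> E x1 * exp (2*\<beta>/x1)" unfolding G1_def by simp
    have "G2 x1 \<le> G2 x" by (rule deriv_nonneg_imp_mono[OF dG2 G2'nn]) (use x x1p in auto)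
    hence g2: "E x1 * exp (- (2*\<beta>/x1)) \<le> E x * exp (- (2*\<beta>/x))" unfolding G2_def by simp
    from bnds[OF x] have Ex: "(P x^2 + Q x^2)/2 \<le> E x" "E x \<le> 3*(P x^2 + Q x^2)/2" by auto
    have "P x^2 + Q x^2 \<ge> 0" by simp
    from half_aux[OF this Ex(1)] have Enn: "E x \<ge> 0" .
    have "E x * 1 \<le> E x * exp (2*\<beta>/x)" using Enn b xp by (intro mult_left_mono) auto
    with g1 have "E x \<le> E x1 * exp (2*\<beta>/x1)" by simp
    thus "P x ^ 2 + Q x ^ 2 \<le> 2 * (E x1 * exp (2*\<beta>/x1))" using Ex by simp
    have "E x * exp (- (2*\<beta>/x)) \<le> E x * 1" using Enn b xp by (intro mult_left_mono) auto
    with g2 have "E x1 * exp (- (2*\<beta>/x1)) \<le> E x" by simp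
    thus "2/3 * (E x1 * exp (- (2*\<beta>/x1))) \<le> P x ^ 2 + Q x ^ 2" using Ex by simp
  qed
qed

lemma oscill:
  fixes P Q :: "real \<Rightarrow> real" and \<beta> x1 c1 :: real
  assumes b: "\<beta> > 0"
    and dP: "\<And>x. x > 0 \<Longrightarrow> (P has_real_derivative (\<beta>/x*P x - Q x)) (at x)"
    and x1: "2*\<beta> \<le> x1" and c1: "c1 > 0" and low: "\<And>x. x \<ge> x1 \<Longrightarrow> c1 \<le> P x ^ 2 + Q x ^ 2"
  shows "\<exists>m>0. \<forall>s\<ge>x1. \<exists>x. s \<le> x \<and> x \<le> s + 1/2 \<and> m \<le> \<bar>P x\<bar>"
proof -
  define q0 where "q0 = sqrt (c1/2)"
  define m where "m = q0/5"
  have q0p: "q0 > 0" unfolding q0_def using c1 by simp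
  have q0sq: "q0^2 = c1/2" unfolding q0_def using c1 by simp
  have mp: "m > 0" unfolding m_def using q0p by simp
  have x1p: "x1 > 0" using b x1 by simp
  show ?thesis
  proof (rule exI[of _ m], intro conjI allI impI)
    show "m > 0" by (rule mp)
  next
    fix s assume s: "x1 \<le> s"
    show "\<exists>x. s \<le> x \<and> x \<le> s + 1/2 \<and> m \<le> \<bar>P x\<bar>"
    proof (rule ccontr)
      assume "\<not> ?thesis"
      hence small: "\<And>x. s \<le> x \<Longrightarrow> x \<le> s + 1/2 \<Longrightarrow> \<bar>P x\<bar> < m" by force
      have "s < s + 1/2" by simp
      from MVT2[OF this, of P "\<lambda>x. \<beta>/x*P x - Q x"] dP s x1p
      obtain z where z: "s < z" "z < s + 1/2" and eq: "P (s+1/2) - P s = (s + 1/2 - s) * (\<beta>/z*P z - Q z)"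
        by force
      have zp: "z > 0" using z s x1p by simp
      have Pz: "\<bar>P z\<bar> < m" using small z by simp
      have "c1 \<le> P z ^ 2 + Q z ^ 2" using low z s by simp
      moreover have "P z ^ 2 \<le> m^2" using Pz by (metis abs_ge_zero less_imp_le power2_abs power_mono)
      moreover have "m^2 = c1/50" unfolding m_def using q0sq by (simp add: power_divide)
      ultimately have "q0^2 \<le> Q z^2" using q0sq c1 by linarith
      hence "q0^2 \<le> \<bar>Q z\<bar>^2" by simp
      hence Qz: "q0 \<le> \<bar>Q z\<bar>" by (rule power2_le_imp_le) simp
      have "\<beta>/z \<le> 1/2" using z s x1 zp by (simp add: divide_simps)
      hence "\<beta>/z * \<bar>P z\<bar> \<le> 1/2 * m" using Pz b zp by (intro mult_mono) auto
      hence A: "\<bar>\<beta>/z * P z\<bar> \<le> m/2" using b zp by (simp add: abs_mult)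
      have "\<bar>\<beta>/z*P z - Q z\<bar> \<ge> q0 - m/2" using A Qz by linarith
      hence B: "\<bar>P (s+1/2) - P s\<bar> \<ge> (q0 - m/2)/2" unfolding eq by simp
      have C: "\<bar>P (s+1/2)\<bar> < m" "\<bar>P s\<bar> < m" using small by auto
      have "q0 = 5*m" unfolding m_def by simp
      with B have B': "9/4*m \<le> \<bar>P (s+1/2) - P s\<bar>" by simp
      have "\<bar>P (s+1/2) - P s\<bar> \<le> \<bar>P (s+1/2)\<bar> + \<bar>P s\<bar>" by (rule abs_triangle_ineq4)
      thus False using B' C mp by linarith
    qed
  qed
qed



lemma isCont_Yv: "v > 0 \<Longrightarrow> isCont (Yv v) t"
  using DERIV_Yv DERIV_isCont by blast

lemma continuous_on_Yv_comp[continuous_intros]: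
  "v > 0 \<Longrightarrow> continuous_on S f \<Longrightarrow> continuous_on S (\<lambda>x. Yv v (f x))"
  using continuous_on_compose2[of UNIV "Yv v" S f] isCont_Yv
  by (simp add: continuous_at_imp_continuous_on)

lemma bessel_j_Yv: assumes "a > 0" shows "bessel_j a y = Gamma (a + 1) * Yv a (y^2)"
proof -
  have "\<And>k. ((-1) ^ k * Gamma (a + 1)) / (2 ^ (2 * k) * fact k * Gamma (a + real k + 1)) * y ^ (2 * k)
          = Gamma (a + 1) * (bc a k * (y^2)^k)"
    unfolding bc_def by (simp add: power_mult power_mult_distrib)
  hence "bessel_j a y = (\<Sum>k. Gamma (a + 1) * (bc a k * (y^2)^k))" unfolding bessel_j_def by simp
  also have "\<dots> = Gamma (a + 1) * (\<Sum>k. bc a k * (y^2)^k)"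
    using suminf_mult[OF bc_summable[OF assms, of "y^2"]] by simp
  finally show ?thesis unfolding Yv_def .
qed

lemma deriv_W:
  assumes a: "a > 0" and z: "z > 0"
  shows "((\<lambda>z. z powr (2*a+2) * Yv (a+1) ((l*z)^2)) has_real_derivative
           2 * (z powr (2*a+1) * Yv a ((l*z)^2))) (at z)"
proof -
  have a1: "a + 1 > 0" using a by simp
  have dlz: "((\<lambda>z. (l*z)^2) has_real_derivative 2*l*(l*z)) (at z)"
    by (auto intro!: derivative_eq_intros)
  note d = DERIV_mult[OF has_real_derivative_powr[OF z, of "2*a+2"] DERIV_Yv_comp[OF a1 dlz]]
  have e1: "z powr (2*a+2 - 1) = z powr (2*a+1)" by (rule arg_cong[of _ _ "\<lambda>e. z powr e"]) simp
  have e2: "z powr (2*a+2) = z powr (2*a+1) * z"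
  proof -
    have "z powr (2*a+1+1) = z powr (2*a+1) * z" by (subst powr_add) (use z in simp)
    moreover have "2*a+1+1 = 2*a+2" by simp
    ultimately show ?thesis by simp
  qed
  have r: "(2 * a + 2) * Yv (a+1) ((l*z)^2) - ((l*z)^2/2) * Yv (a+2) ((l*z)^2) = 2 * Yv a ((l*z)^2)"
    by (rule Yv_rel[OF a])
  have r': "Yv a ((l*z)^2) = ((2 * a + 2) * Yv (a+1) ((l*z)^2) - ((l*z)^2/2) * Yv (a+2) ((l*z)^2))/2"
    using r by simp
  have e3: "a + 1 + 1 = a + 2" by simp
  show ?thesis apply (rule DERIV_cong[OF d]) unfolding e1 e2 e3 r'
    by (simp add: field_simps power2_eq_square)
qed

lemma fourier_eq:
  assumes a: "a > 0"
  shows "bk_fourier a (indicator {0..<1}) l = Gamma (a+1) / 2 * Yv (a+1) (l^2)"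
proof -
  define h where "h z = indicator {0..} z * z powr (2*a+1)" for z :: real
  have haar: "haar a = density lborel (\<lambda>z. ennreal (h z))"
    unfolding haar_def h_def by (rule arg_cong[of _ _ "density lborel"]) (auto simp: indicator_def fun_eq_iff)
  define g where "g x = x powr (2*a+1) * (Gamma (a+1) * Yv a ((l*x)^2))" for x
  have bj: "bessel_j a (l*x) = Gamma (a+1) * Yv a ((l*x)^2)" for x using bessel_j_Yv[OF a] by simp
  have cbj: "continuous_on UNIV (\<lambda>x. Gamma (a+1) * Yv a ((l*x)^2))"
    using a by (intro continuous_intros) auto
  have mbj: "(\<lambda>x. bessel_j a (l*x)) \<in> borel_measurable borel"
    unfolding bj by (rule borel_measurable_continuous_onI[OF cbj])
  have mh: "h \<in> borel_measurable borel" unfolding h_def by measurable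
  have mf: "(\<lambda>x. indicator {0..<1} x * bessel_j a (l*x)) \<in> borel_measurable borel"
    using mbj by measurable
  have cg: "continuous_on {0..1} g" unfolding g_def using a
    by (intro continuous_intros continuous_on_powr') auto
  have ig: "set_integrable lborel {0..1} g" by (rule borel_integrable_atLeastAtMost'[OF cg])
  have "bk_fourier a (indicator {0..<1}) l = (\<integral>x. h x *\<^sub>R (indicator {0..<1} x * bessel_j a (l*x)) \<partial>lborel)"
    unfolding bk_fourier_def haar
    by (rule integral_density) (use mf mh in \<open>auto simp: h_def\<close>)
  also have "\<dots> = (\<integral>x. indicator {0..1} x *\<^sub>R g x \<partial>lborel)"
  proof (rule integral_cong_AE)
    show "(\<lambda>x. h x *\<^sub>R (indicator {0..<1} x * bessel_j a (l*x))) \<in> borel_measurable lborel"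
      using mf mh by measurable
    show "(\<lambda>x. indicator {0..1} x *\<^sub>R g x) \<in> borel_measurable lborel"
      using ig unfolding set_integrable_def by (rule borel_measurable_integrable)
    show "AE x in lborel. h x *\<^sub>R (indicator {0..<1} x * bessel_j a (l*x)) = indicator {0..1} x *\<^sub>R g x"
      using AE_lborel_singleton[of 1]
    proof (rule eventually_mono)
      fix x :: real assume "x \<noteq> 1"
      thus "h x *\<^sub>R (indicator {0..<1} x * bessel_j a (l*x)) = indicator {0..1} x *\<^sub>R g x"
        unfolding h_def g_def bj by (auto simp: indicator_def)
    qed
  qed
  also have "\<dots> = integral {0..1} g"
    using set_borel_integral_eq_integral(2)[OF ig] unfolding set_lebesgue_integral_def .
  also have "integral {0..1} g = Gamma (a+1) / 2 * Yv (a+1) (l^2)"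
  proof -
    define W where "W z = Gamma (a+1) / 2 * (z powr (2*a+2) * Yv (a+1) ((l*z)^2))" for z
    have "(g has_integral (W 1 - W 0)) {0..1}"
    proof (rule fundamental_theorem_of_calculus_interior_strong[of "{}"])
      show "continuous_on {0..1} W" unfolding W_def using a
        by (intro continuous_intros continuous_on_powr') auto
      fix x :: real assume x: "x \<in> {0<..<1} - {}"
      hence xp: "x > 0" by simp
      have "(W has_real_derivative Gamma (a+1) / 2 * (2 * (x powr (2*a+1) * Yv a ((l*x)^2)))) (at x)"
        unfolding W_def by (rule DERIV_cmult[OF deriv_W[OF a xp]])
      thus "(W has_vector_derivative g x) (at x)"
        unfolding has_real_derivative_iff_has_vector_derivative[symmetric] g_def by (simp add: ac_simps)
    qed auto
    hence "integral {0..1} g = W 1 - W 0" by (rule integral_unique)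
    thus ?thesis unfolding W_def by (simp add: power_mult_distrib)
  qed
  finally show ?thesis .
qed



lemma Yv_zero: "Yv v 0 = 1 / Gamma (v + 1)"
  unfolding Yv_def using powser_zero[of "bc v"] by (simp add: bc_def)

lemma bessel_asym:
  assumes nu: "nu > 0"
  shows "\<exists>x1 M m. x1 > 0 \<and> m > 0 \<and>
     (\<forall>x\<ge>x1. \<bar>x powr (nu+1/2) * Yv nu (x^2)\<bar> \<le> M) \<and>
     (\<forall>s\<ge>x1. \<exists>x. s \<le> x \<and> x \<le> s+1/2 \<and> m \<le> \<bar>x powr (nu+1/2) * Yv nu (x^2)\<bar>)"
proof -
  define \<beta> where "\<beta> = nu + 1/2"
  define P where "P x = x powr (nu+1/2) * Yv nu (x^2)" for x
  define Q where "Q x = x powr (nu + 1/2 + 1) * Yv (nu+1) (x^2) / 2" for x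
  have b: "\<beta> > 0" unfolding \<beta>_def using nu by simp
  have dP: "(P has_real_derivative (\<beta>/x*P x - Q x)) (at x)" if "x > 0" for x
    using ode_P[OF nu that] unfolding P_def[abs_def] Q_def \<beta>_def .
  have dQ: "(Q has_real_derivative (P x - \<beta>/x*Q x)) (at x)" if "x > 0" for x
    using ode_Q[OF nu that] unfolding P_def Q_def[abs_def] \<beta>_def .
  define x1 where "x1 = 2*\<beta>"
  have x1p: "x1 > 0" unfolding x1_def using b by simp
  have nz: "P x1 ^ 2 + Q x1 ^ 2 > 0"
  proof (rule ccontr)
    assume "\<not> ?thesis"
    hence "P x1 ^ 2 + Q x1 ^ 2 \<le> 0" by simp
    moreover have "P x1 ^ 2 \<ge> 0" "Q x1 ^ 2 \<ge> 0" by simp_all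
    ultimately have "P x1 ^ 2 = 0" "Q x1 ^ 2 = 0" by linarith+
    hence z: "P x1 = 0" "Q x1 = 0" by simp_all
    have Y0: "Yv nu 0 > 0" unfolding Yv_zero using nu by simp
    have "continuous (at 0) (Yv nu)" using isCont_Yv[OF nu] .
    then obtain \<delta> where \<delta>: "\<delta> > 0" "\<And>t. dist t 0 < \<delta> \<Longrightarrow> dist (Yv nu t) (Yv nu 0) < Yv nu 0"
      unfolding continuous_at_eps_delta using Y0 by blast
    define d where "d = min x1 (sqrt \<delta> / 2)"
    have dp: "d > 0" unfolding d_def using x1p \<delta> by simp
    have dx: "d \<le> x1" unfolding d_def by simp
    have "d \<le> sqrt \<delta> / 2" unfolding d_def by simp
    hence "d^2 \<le> (sqrt \<delta> / 2)^2" using dp by (intro power_mono) auto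
    also have "\<dots> = \<delta> / 4" using \<delta> by (simp add: power_divide)
    finally have "d^2 < \<delta>" using \<delta> by simp
    hence "dist (Yv nu (d^2)) (Yv nu 0) < Yv nu 0" using \<delta> by (simp add: dist_real_def)
    moreover have "P d = 0" by (rule nonvanish[OF b dP dQ dp dx z])
    hence "Yv nu (d^2) = 0" unfolding P_def using dp by simp
    ultimately show False by (simp add: dist_real_def)
  qed
  obtain c1 c2 where c1: "c1 > 0" and cb: "\<And>x. x \<ge> x1 \<Longrightarrow> c1 \<le> P x ^ 2 + Q x ^ 2 \<and> P x ^ 2 + Q x ^ 2 \<le> c2"
    using energy[OF b dP dQ _ nz] unfolding x1_def by auto
  obtain m where m: "m > 0" "\<And>s. s \<ge> x1 \<Longrightarrow> \<exists>x. s \<le> x \<and> x \<le> s + 1/2 \<and> m \<le> \<bar>P x\<bar>"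
    using oscill[OF b dP _ c1, of x1] cb unfolding x1_def by auto
  have up: "\<bar>P x\<bar> \<le> sqrt c2" if "x \<ge> x1" for x
  proof -
    have "P x^2 \<le> c2" using cb[OF that] zero_le_power2[of "Q x"] by linarith
    hence "\<bar>P x\<bar>^2 \<le> c2" by simp
    thus ?thesis by (rule real_le_rsqrt)
  qed
  show ?thesis using x1p m up unfolding P_def by blast
qed



lemma haar_eq: "haar a = density lborel (\<lambda>z. ennreal (indicator {0..} z * z powr (2*a+1)))"
  unfolding haar_def by (rule arg_cong[of _ _ "density lborel"]) (auto simp: indicator_def fun_eq_iff)

lemma omega_bounds:
  assumes a: "a > 0" and n: "n \<ge> 1"
  shows "(real n - 1) powr (2*a+1) \<le> omega_n a n" "omega_n a n \<le> real n powr (2*a+1)"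
proof -
  define r where "r = 2*a+1"
  have r: "r \<ge> 0" unfolding r_def using a by simp
  define h where "h z = indicator {0..} z * z powr r" for z :: real
  have I: "I_int n = {real n - 1..<real n}" unfolding I_int_def ..
  have mh: "(\<lambda>z. ennreal (h z)) \<in> borel_measurable lborel" unfolding h_def by measurable
  have em: "emeasure (haar a) (I_int n) = (\<integral>\<^sup>+ x. ennreal (h x) * indicator (I_int n) x \<partial>lborel)"
    unfolding haar_eq h_def r_def by (rule emeasure_density) (use mh in \<open>auto simp: h_def r_def I\<close>)
  have hb: "(real n - 1) powr r \<le> h x \<and> h x \<le> real n powr r" if "x \<in> I_int n" for x
  proof -
    have x: "real n - 1 \<le> x" "x < real n" using that I by auto
    have x0: "x \<ge> 0" using x n by simp
    have "(real n - 1) powr r \<le> x powr r" using x n r by (intro powr_mono2) auto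
    moreover have "x powr r \<le> real n powr r" using x x0 r by (intro powr_mono2) auto
    ultimately show ?thesis unfolding h_def using x0 by simp
  qed
  have leb: "emeasure lborel (I_int n) = 1" unfolding I by simp
  have "emeasure (haar a) (I_int n) \<le> (\<integral>\<^sup>+ x. ennreal (real n powr r) * indicator (I_int n) x \<partial>lborel)"
    unfolding em by (intro nn_integral_mono) (auto simp: indicator_def hb)
  also have "\<dots> = ennreal (real n powr r)" by (subst nn_integral_cmult_indicator) (auto simp: I leb)
  finally have up: "emeasure (haar a) (I_int n) \<le> ennreal (real n powr r)" .
  have "ennreal ((real n - 1) powr r) = (\<integral>\<^sup>+ x. ennreal ((real n - 1) powr r) * indicator (I_int n) x \<partial>lborel)"
    by (subst nn_integral_cmult_indicator) (auto simp: I leb)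
  also have "\<dots> \<le> emeasure (haar a) (I_int n)"
    unfolding em by (intro nn_integral_mono) (auto simp: indicator_def hb intro!: ennreal_leI)
  finally have lo: "ennreal ((real n - 1) powr r) \<le> emeasure (haar a) (I_int n)" .
  have fin: "emeasure (haar a) (I_int n) < top" using up by (simp add: le_less_trans)
  show "omega_n a n \<le> real n powr (2*a+1)"
    unfolding omega_n_def measure_def r_def[symmetric]
    using enn2real_mono[OF up] by simp
  show "(real n - 1) powr (2*a+1) \<le> omega_n a n"
    unfolding omega_n_def measure_def r_def[symmetric]
    using enn2real_mono[OF lo fin] by simp
qed

lemma F_asym:
  assumes a: "a > 0"
  shows "\<exists>x1 M m0. x1 > 0 \<and> m0 > 0 \<and> M \<ge> 0 \<and>
   (\<forall>l\<ge>x1. \<bar>bk_fourier a (indicator {0..<1}) l\<bar> \<le> M / l powr (a+1+1/2)) \<and>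
   (\<forall>s\<ge>x1. \<exists>l. s \<le> l \<and> l \<le> s+1/2 \<and> m0 / l powr (a+1+1/2) \<le> \<bar>bk_fourier a (indicator {0..<1}) l\<bar>)"
proof -
  have nu: "a + 1 > 0" using a by simp
  obtain x1 M m where x1: "x1 > 0" and m: "m > 0"
    and up: "\<And>x. x \<ge> x1 \<Longrightarrow> \<bar>x powr (a+1+1/2) * Yv (a+1) (x^2)\<bar> \<le> M"
    and lo: "\<And>s. s \<ge> x1 \<Longrightarrow> \<exists>x. s \<le> x \<and> x \<le> s+1/2 \<and> m \<le> \<bar>x powr (a+1+1/2) * Yv (a+1) (x^2)\<bar>"
    using bessel_asym[OF nu] by blast
  define K where "K = Gamma (a+1) / 2"
  have K: "K > 0" unfolding K_def using a by simp
  have Fe: "\<bar>bk_fourier a (indicator {0..<1}) l\<bar> = K * \<bar>l powr (a+1+1/2) * Yv (a+1) (l^2)\<bar> / l powr (a+1+1/2)"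
    if "l > 0" for l
    unfolding fourier_eq[OF a] K_def using that a by (simp add: abs_mult)
  have M0: "M \<ge> 0" using up[of x1] by auto
  show ?thesis
  proof (rule exI[of _ x1], rule exI[of _ "K*M"], rule exI[of _ "K*m"], intro conjI allI impI)
    show "x1 > 0" "K*m > 0" "K*M \<ge> 0" using x1 m K M0 by auto
  next
    fix l assume l: "x1 \<le> l"
    hence lp: "l > 0" using x1 by simp
    show "\<bar>bk_fourier a (indicator {0..<1}) l\<bar> \<le> K * M / l powr (a+1+1/2)"
      unfolding Fe[OF lp] using up[OF l] K lp by (intro divide_right_mono mult_left_mono) auto
  next
    fix s assume s: "x1 \<le> s"
    obtain l where l: "s \<le> l" "l \<le> s+1/2" "m \<le> \<bar>l powr (a+1+1/2) * Yv (a+1) (l^2)\<bar>"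
      using lo[OF s] by blast
    have lp: "l > 0" using l s x1 by simp
    have "K * m / l powr (a+1+1/2) \<le> \<bar>bk_fourier a (indicator {0..<1}) l\<bar>"
      unfolding Fe[OF lp] using l K lp by (intro divide_right_mono mult_left_mono) auto
    thus "\<exists>l. s \<le> l \<and> l \<le> s+1/2 \<and> K * m / l powr (a+1+1/2) \<le> \<bar>bk_fourier a (indicator {0..<1}) l\<bar>"
      using l by blast
  qed
qed

lemma F_cont: assumes a: "a > 0" shows "continuous_on UNIV (bk_fourier a (indicator {0..<1}))"
proof -
  have "continuous_on UNIV (\<lambda>l. Gamma (a+1) / 2 * Yv (a+1) (l^2))" using a
    by (intro continuous_intros) auto
  thus ?thesis unfolding fourier_eq[OF a, abs_def] .
qed

lemma F_bdd: assumes a: "a > 0"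
  shows "bdd_above ((\<lambda>l. \<bar>bk_fourier a (indicator {0..<1}) l\<bar>) ` I_int n)"
proof -
  let ?F = "bk_fourier a (indicator {0..<1})"
  have "continuous_on {real n - 1..real n} (\<lambda>l. \<bar>?F l\<bar>)"
    using F_cont[OF a] by (intro continuous_intros) (auto intro: continuous_on_subset)
  hence "compact ((\<lambda>l. \<bar>?F l\<bar>) ` {real n - 1..real n})" by (intro compact_continuous_image) auto
  hence "bdd_above ((\<lambda>l. \<bar>?F l\<bar>) ` {real n - 1..real n})" by (intro bounded_imp_bdd_above compact_imp_bounded)
  moreover have "(\<lambda>l. \<bar>?F l\<bar>) ` I_int n \<subseteq> (\<lambda>l. \<bar>?F l\<bar>) ` {real n - 1..real n}"
    unfolding I_int_def by auto
  ultimately show ?thesis by (rule bdd_above_mono)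
qed

lemma I_Suc: "I_int (Suc m) = {real m..<real m + 1}" unfolding I_int_def by (simp add: ac_simps)

lemma key:
  assumes a: "a > 0" and q: "q > 0"
  shows "amalgam_norm_finite a q (bk_fourier a (indicator {0..<1})) \<longleftrightarrow> q > 2 * (a + 1) / (a + 3/2)"
proof -
  define F where "F = bk_fourier a (indicator {0..<1})"
  define b where "b = a+1+1/2"
  define r where "r = 2*a+1"
  define s where "s = r - b*q"
  have bp: "b > 0" unfolding b_def using a by simp
  have r0: "r \<ge> 0" unfolding r_def using a by simp
  obtain x1 M m0 where x1: "x1 > 0" and m0: "m0 > 0" and M0: "M \<ge> 0"
    and up: "\<And>l. l \<ge> x1 \<Longrightarrow> \<bar>F l\<bar> \<le> M / l powr b"
    and lo: "\<And>t. t \<ge> x1 \<Longrightarrow> \<exists>l. t \<le> l \<and> l \<le> t+1/2 \<and> m0 / l powr b \<le> \<bar>F l\<bar>"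
    using F_asym[OF a] unfolding F_def b_def by blast
  have bdd: "\<And>n. bdd_above ((\<lambda>l. \<bar>F l\<bar>) ` I_int n)" unfolding F_def by (rule F_bdd[OF a])
  define SU where "SU m = (SUP l\<in>I_int (Suc m). \<bar>F l\<bar>)" for m
  define T where "T m = omega_n a (Suc m) * SU m powr q" for m
  define N where "N = nat \<lceil>x1\<rceil> + 1"
  have mN: "real m \<ge> x1" "real m \<ge> 1" if "m \<ge> N" for m
    using that x1 unfolding N_def by linarith+
  have SUnn: "SU m \<ge> 0" for m
  proof -
    have "\<bar>F (real m)\<bar> \<le> SU m" unfolding SU_def by (rule cSUP_upper[OF _ bdd]) (simp add: I_Suc)
    thus ?thesis by linarith
  qed
  have SUup: "SU m \<le> M / real m powr b" if "m \<ge> N" for m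
    unfolding SU_def
  proof (rule cSUP_least)
    show "I_int (Suc m) \<noteq> {}" by (simp add: I_Suc)
    fix l assume "l \<in> I_int (Suc m)"
    hence l: "real m \<le> l" by (simp add: I_Suc)
    have mp: "real m > 0" using mN[OF that] by simp
    have "\<bar>F l\<bar> \<le> M / l powr b" using up l mN[OF that] by simp
    also have "\<dots> \<le> M / real m powr b" using l mp M0 bp
      by (intro divide_left_mono powr_mono2 mult_pos_pos) auto
    finally show "\<bar>F l\<bar> \<le> M / real m powr b" .
  qed
  have SUlo: "m0 / (real m + 1) powr b \<le> SU m" if mm: "m \<ge> N" for m
  proof -
    obtain l where l: "real m \<le> l" "l \<le> real m + 1/2" "m0 / l powr b \<le> \<bar>F l\<bar>"
      using lo[OF mN(1)[OF mm]] by blast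
    have lp: "l > 0" using l mN[OF mm] by simp
    have "m0 / (real m + 1) powr b \<le> m0 / l powr b" using l lp m0 bp
      by (intro divide_left_mono powr_mono2 mult_pos_pos) auto
    also have "\<dots> \<le> \<bar>F l\<bar>" by (rule l(3))
    also have "\<dots> \<le> SU m" unfolding SU_def by (rule cSUP_upper[OF _ bdd]) (use l in \<open>simp add: I_Suc\<close>)
    finally show ?thesis .
  qed
  have om: "real m powr r \<le> omega_n a (Suc m)" "omega_n a (Suc m) \<le> (real m + 1) powr r" for m
    using omega_bounds[OF a, of "Suc m"] unfolding r_def by (simp_all add: add.commute)
  have Tnn: "T m \<ge> 0" for m unfolding T_def using om(1)[of m] 
    by (intro mult_nonneg_nonneg) (auto intro: order_trans[OF powr_ge_zero])
  have Tup: "T m \<le> (2 powr r * M powr q) * real m powr s" if "m \<ge> N" for m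
  proof -
    have m1: "real m \<ge> 1" using mN[OF that] by simp
    have "T m \<le> (real m + 1) powr r * (M / real m powr b) powr q"
      unfolding T_def using om(2)[of m] SUup[OF that] SUnn q
      by (intro mult_mono powr_mono2) auto
    also have "(real m + 1) powr r \<le> (2 * real m) powr r" using m1 r0 by (intro powr_mono2) auto
    hence "(real m + 1) powr r * (M / real m powr b) powr q \<le> (2 * real m) powr r * (M / real m powr b) powr q"
      by (intro mult_right_mono) auto
    also have "(2 * real m) powr r * (M / real m powr b) powr q = (2 powr r * M powr q) * real m powr s"
      using m1 M0 unfolding s_def
      by (simp add: powr_mult powr_divide powr_powr powr_diff field_simps)
    finally show ?thesis .
  qed
  have Tlo: "(m0 powr q / 2 powr r) * real (Suc m) powr s \<le> T m" if "m \<ge> N" for m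
  proof -
    have m1: "real m \<ge> 1" using mN[OF that] by simp
    have "(m0 powr q / 2 powr r) * real (Suc m) powr s = ((real m + 1) / 2) powr r * (m0 / (real m + 1) powr b) powr q"
      using m1 m0 unfolding s_def
      by (simp add: powr_mult powr_divide powr_powr powr_diff field_simps)
    also have "((real m + 1) / 2) powr r \<le> real m powr r" using m1 r0 by (intro powr_mono2) auto
    hence "((real m + 1) / 2) powr r * (m0 / (real m + 1) powr b) powr q \<le> real m powr r * (m0 / (real m + 1) powr b) powr q"
      by (intro mult_right_mono) auto
    also have "\<dots> \<le> T m"
      unfolding T_def using om(1)[of m] SUlo[OF that] m0 q order_trans[OF powr_ge_zero om(1)[of m]]
      by (intro mult_mono powr_mono2) auto
    finally show ?thesis .
  qed
  have thr: "q > 2 * (a + 1) / (a + 3/2) \<longleftrightarrow> s < -1"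
  proof -
    have "a + 3/2 = b" unfolding b_def by simp
    hence "q > 2 * (a + 1) / (a + 3/2) \<longleftrightarrow> 2 * (a + 1) < q * b" using bp by (simp add: divide_less_eq)
    also have "\<dots> \<longleftrightarrow> s < -1" unfolding s_def r_def by (auto simp: algebra_simps)
    finally show ?thesis .
  qed
  have "summable T \<longleftrightarrow> s < -1"
  proof
    assume sT: "summable T"
    show "s < -1"
    proof (rule ccontr)
      assume ns: "\<not> s < -1"
      define c where "c = m0 powr q / 2 powr r"
      have cp: "c > 0" unfolding c_def using m0 by simp
      have "summable (\<lambda>m. c * real (Suc m) powr s)"
      proof (rule summable_comparison_test'[OF sT, of N])
        fix n assume "n \<ge> N"
        from Tlo[OF this] cp show "norm (c * real (Suc n) powr s) \<le> T n" unfolding c_def by simp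
      qed
      hence "summable (\<lambda>m. (1/c) * (c * real (Suc m) powr s))" by (rule summable_mult)
      hence "summable (\<lambda>m. real (Suc m) powr s)" using cp by simp
      hence "summable (\<lambda>m. real m powr s)" using summable_Suc_iff[of "\<lambda>m. real m powr s"] by simp
      thus False using ns summable_real_powr_iff by simp
    qed
  next
    assume "s < -1"
    hence "summable (\<lambda>m. real m powr s)" using summable_real_powr_iff by simp
    hence "summable (\<lambda>m. (2 powr r * M powr q) * real m powr s)" by (rule summable_mult)
    thus "summable T"
      by (rule summable_comparison_test'[of _ N]) (use Tup Tnn in auto)
  qed
  moreover have "amalgam_norm_finite a q (bk_fourier a (indicator {0..<1})) \<longleftrightarrow> summable T"
    unfolding amalgam_norm_finite_def T_def SU_def F_def[symmetric] using bdd by auto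
  ultimately show ?thesis using thr by simp
qed


theorem mainTheorem10:
  fixes a q :: real
  assumes "a \<ge> 1/2" and "1 \<le> q"
  shows "(amalgam_norm_finite a q (bk_fourier a (indicator {0..<1}))
            \<longleftrightarrow> q > 2 * (a + 1) / (a + 3/2))
         \<and> bk_fourier a (indicator {0..<1}) \<in> amalgam_space a 2"
proof
  have a: "a > 0" using assms(1) by simp
  show "amalgam_norm_finite a q (bk_fourier a (indicator {0..<1})) \<longleftrightarrow> q > 2 * (a + 1) / (a + 3/2)"
    using key[OF a] assms(2) by simp
  have "2 * (a + 1) / (a + 3/2) < 2" using a by (simp add: divide_less_eq)
  hence "amalgam_norm_finite a 2 (bk_fourier a (indicator {0..<1}))" using key[OF a, of 2] by simp
  moreover have "bk_fourier a (indicator {0..<1}) \<in> borel_measurable borel"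
    by (rule borel_measurable_continuous_onI[OF F_cont[OF a]])
  ultimately show "bk_fourier a (indicator {0..<1}) \<in> amalgam_space a 2"
    unfolding amalgam_space_def by simp
qed

end
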